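(* Let $\mu\ge 2$ be an integer and consider a Markov chain $(X_t)_{t\ge0}$ on $\{1,2,\dots,\mu\}$ with transition probabilities $\Pr[X_{t+1}=X_t+1\mid X_t]=X_t(\mu-X_t)/\mu^2$ for $1\le X_t<\mu$, $\Pr[X_{t+1}=X_t-1\mid X_t]=X_t(\mu-X_t)/\mu^2$ for $1<X_t<\mu$, and $X_{t+1}=X_t$ with the remaining probability. Let $T$ be the first hitting time of state $\mu$. Then for all starting states $X_0$, \[ \frac12(\mu-X_0)\mu\ln(\mu-1)\le \mathrm{E}[T\mid X_0]\le 4(\mu-X_0)\mu H_{\lfloor\mu/2\rfloor}\le 4\mu^2\ln\mu. \] In addition, if $n$ is a positive integer with $\mu\le n$, then $\Pr[T\ge 8\mu^2\log^3 n]\le n^{-\log n}$.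
   Context: $H_m=\sum_{k=1}^m 1/k$ denotes the $m$-th harmonic number; $\ln$ is the natural logarithm and $\log$ the binary logarithm. *)

theory Defs
  imports "HOL-Probability.Probability"
begin

text \<open>Canonical construction of the Markov chain on \<open>{1..\<mu>}\<close>: at every step an
  independent innovation \<open>u\<close>, uniform on \<open>{0..<\<mu>^2}\<close>, is drawn.\<close>

definition chain_step :: "nat \<Rightarrow> nat \<Rightarrow> nat \<Rightarrow> nat" where
  "chain_step \<mu> x u =
     (if 1 \<le> x \<and> x < \<mu> \<and> u < x * (\<mu> - x) then x + 1
      else if 1 < x \<and> x < \<mu> \<and> u < 2 * x * (\<mu> - x) then x - 1
      else x)"

definition innov_space :: "nat \<Rightarrow> nat stream measure" where
  "innov_space \<mu> = stream_space (measure_pmf (pmf_of_set {0..<\<mu>^2}))"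

fun chain :: "nat \<Rightarrow> nat \<Rightarrow> nat stream \<Rightarrow> nat \<Rightarrow> nat" where
  "chain \<mu> x0 \<omega> 0 = x0"
| "chain \<mu> x0 \<omega> (Suc t) = chain_step \<mu> (chain \<mu> x0 \<omega> t) (\<omega> !! t)"

definition hit_time :: "nat \<Rightarrow> nat \<Rightarrow> nat stream \<Rightarrow> enat" where
  "hit_time \<mu> x0 \<omega> =
     (if \<exists>t. chain \<mu> x0 \<omega> t = \<mu> then enat (LEAST t. chain \<mu> x0 \<omega> t = \<mu>) else \<infinity>)"

end

theory Submission
  imports Defs
begin

lemma chain_Cons_Suc: "chain \<mu> x (u ## \<omega>) (Suc t) = chain \<mu> (chain_step \<mu> x u) \<omega> t"
  by (induction t) (auto simp: Stream_snth)

lemma chain_Cons_0: "chain \<mu> x (u ## \<omega>) 0 = x" by simp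

lemma chain_mu: "chain \<mu> \<mu> \<omega> t = \<mu>"
  by (induction t) (auto simp: chain_step_def)

lemma hit_Cons: "hit_time \<mu> x (u ## \<omega>) =
   (if x = \<mu> then 0 else eSuc (hit_time \<mu> (chain_step \<mu> x u) \<omega>))"
proof (cases "x = \<mu>")
  case True
  then show ?thesis unfolding hit_time_def
    by (auto simp: zero_enat_def intro!: Least_equality exI[of _ 0])
next
  case False
  have ex: "(\<exists>t. chain \<mu> x (u ## \<omega>) t = \<mu>) \<longleftrightarrow> (\<exists>t. chain \<mu> (chain_step \<mu> x u) \<omega> t = \<mu>)"
    using False by (metis chain_Cons_Suc chain_Cons_0 not0_implies_Suc)
  show ?thesis
  proof (cases "\<exists>t. chain \<mu> (chain_step \<mu> x u) \<omega> t = \<mu>")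
    case True
    then obtain t where t: "chain \<mu> (chain_step \<mu> x u) \<omega> t = \<mu>" by blast
    have "(LEAST t. chain \<mu> x (u ## \<omega>) t = \<mu>) = Suc (LEAST t. chain \<mu> (chain_step \<mu> x u) \<omega> t = \<mu>)"
      by (rule Least_Suc2[where n="Suc t"]) (use t False in \<open>auto simp del: chain.simps(2) simp: chain_Cons_Suc\<close>)
    then show ?thesis using True ex False unfolding hit_time_def by (simp add: eSuc_enat)
  next
    case F2: False
    then show ?thesis using ex False unfolding hit_time_def by simp
  qed
qed

abbreviation U :: "nat \<Rightarrow> nat measure" where
  "U \<mu> \<equiv> measure_pmf (pmf_of_set {0..<\<mu>^2})"

lemma chain_meas[measurable]: "(\<lambda>\<omega>. chain \<mu> x \<omega> t) \<in> measurable (stream_space (U \<mu>)) (count_space UNIV)"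
proof (induction t)
  case 0 then show ?case by simp
next
  case (Suc t)
  have "(\<lambda>\<omega>. chain_step \<mu> (chain \<mu> x \<omega> t) (\<omega> !! t)) \<in> measurable (stream_space (U \<mu>)) (count_space UNIV)"
  proof (rule measurable_compose_countable'[where I=UNIV, OF _ Suc.IH])
    fix i :: nat
    show "(\<lambda>\<omega>. chain_step \<mu> i (\<omega> !! t)) \<in> measurable (stream_space (U \<mu>)) (count_space UNIV)"
      by (rule measurable_compose[OF measurable_snth]) simp
  qed simp
  then show ?case by simp
qed

lemma hit_meas[measurable]: "hit_time \<mu> x \<in> measurable (stream_space (U \<mu>)) (count_space UNIV)"
  unfolding hit_time_def by measurable

lemma step_int:
  assumes f: "f \<in> borel_measurable (stream_space (U \<mu>))" and mu: "\<mu> > 0"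
  shows "of_nat (\<mu>^2) * (\<integral>\<^sup>+\<omega>. f \<omega> \<partial>stream_space (U \<mu>))
         = (\<Sum>u<\<mu>^2. \<integral>\<^sup>+\<omega>. f (u ## \<omega>) \<partial>stream_space (U \<mu>))"
proof -
  have ne: "{0..<\<mu>^2} \<noteq> {}" using mu by simp
  have "(\<integral>\<^sup>+\<omega>. f \<omega> \<partial>stream_space (U \<mu>)) = (\<integral>\<^sup>+u. (\<integral>\<^sup>+\<omega>. f (u ## \<omega>) \<partial>stream_space (U \<mu>)) \<partial>U \<mu>)"
    by (rule prob_space.nn_integral_stream_space[OF prob_space_measure_pmf f])
  also have "\<dots> = (\<Sum>u\<in>{0..<\<mu>^2}. \<integral>\<^sup>+\<omega>. f (u ## \<omega>) \<partial>stream_space (U \<mu>)) / of_nat (card {0..<\<mu>^2})"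
    by (rule nn_integral_pmf_of_set[OF ne]) simp
  finally have eq: "(\<integral>\<^sup>+\<omega>. f \<omega> \<partial>stream_space (U \<mu>)) = (\<Sum>u<\<mu>^2. \<integral>\<^sup>+\<omega>. f (u ## \<omega>) \<partial>stream_space (U \<mu>)) / of_nat (\<mu>^2)"
    by (simp add: atLeast0LessThan)
  have nz: "(of_nat (\<mu>^2) :: ennreal) \<noteq> 0" using mu by simp
  have nt: "(of_nat (\<mu>^2) :: ennreal) \<noteq> top" by (metis ennreal_of_nat_neq_top)
  show ?thesis unfolding eq ennreal_times_divide
    by (subst mult.commute) (rule mult_divide_eq_ennreal[OF nz nt])
qed

definition E :: "nat \<Rightarrow> nat \<Rightarrow> ennreal" where
  "E \<mu> x = (\<integral>\<^sup>+\<omega>. ennreal_of_enat (hit_time \<mu> x \<omega>) \<partial>stream_space (U \<mu>))"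
definition Et :: "nat \<Rightarrow> nat \<Rightarrow> nat \<Rightarrow> ennreal" where
  "Et \<mu> n x = (\<integral>\<^sup>+\<omega>. ennreal_of_enat (min (hit_time \<mu> x \<omega>) (enat n)) \<partial>stream_space (U \<mu>))"
definition Q :: "nat \<Rightarrow> nat \<Rightarrow> nat \<Rightarrow> ennreal" where
  "Q \<mu> t x = (\<integral>\<^sup>+\<omega>. (if enat t \<le> hit_time \<mu> x \<omega> then 1 else 0) \<partial>stream_space (U \<mu>))"

lemma prob_S: "prob_space (stream_space (U \<mu>))"
  by (rule prob_space.prob_space_stream_space[OF prob_space_measure_pmf])

lemma E_mu: "E \<mu> \<mu> = 0"
proof -
  have "hit_time \<mu> \<mu> \<omega> = 0" for \<omega>
    unfolding hit_time_def by (auto simp: zero_enat_def intro!: Least_equality exI[of _ 0])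
  then show ?thesis unfolding E_def by simp
qed

lemma Et_mu: "Et \<mu> n \<mu> = 0"
proof -
  have "hit_time \<mu> \<mu> \<omega> = 0" for \<omega>
    unfolding hit_time_def by (auto simp: zero_enat_def intro!: Least_equality exI[of _ 0])
  then show ?thesis unfolding Et_def by simp
qed

lemma Et_0: "Et \<mu> 0 x = 0"
  unfolding Et_def by (simp add: zero_enat_def[symmetric])

lemma Q_0: "Q \<mu> 0 x = 1"
proof -
  interpret prob_space "stream_space (U \<mu>)" by (rule prob_S)
  show ?thesis unfolding Q_def by (simp add: zero_enat_def[symmetric] emeasure_space_1)
qed

lemma E_rec:
  assumes "x \<noteq> \<mu>" "\<mu> > 0"
  shows "of_nat (\<mu>^2) * E \<mu> x = of_nat (\<mu>^2) + (\<Sum>u<\<mu>^2. E \<mu> (chain_step \<mu> x u))"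
proof -
  interpret prob_space "stream_space (U \<mu>)" by (rule prob_S)
  have "of_nat (\<mu>^2) * E \<mu> x = (\<Sum>u<\<mu>^2. \<integral>\<^sup>+\<omega>. ennreal_of_enat (hit_time \<mu> x (u ## \<omega>)) \<partial>stream_space (U \<mu>))"
    unfolding E_def by (rule step_int) (auto simp: assms)
  also have "\<dots> = (\<Sum>u<\<mu>^2. 1 + E \<mu> (chain_step \<mu> x u))"
    unfolding E_def using assms
    by (intro sum.cong refl) (simp add: hit_Cons nn_integral_add emeasure_space_1)
  also have "\<dots> = of_nat (\<mu>^2) + (\<Sum>u<\<mu>^2. E \<mu> (chain_step \<mu> x u))"
    by (simp add: sum.distrib)
  finally show ?thesis .
qed

lemma Et_rec:
  assumes "x \<noteq> \<mu>" "\<mu> > 0"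
  shows "of_nat (\<mu>^2) * Et \<mu> (Suc n) x = of_nat (\<mu>^2) + (\<Sum>u<\<mu>^2. Et \<mu> n (chain_step \<mu> x u))"
proof -
  interpret prob_space "stream_space (U \<mu>)" by (rule prob_S)
  have mn: "min (eSuc h) (enat (Suc n)) = eSuc (min h (enat n))" for h
    by (cases h) (auto simp: eSuc_enat[symmetric] min_def)
  have "of_nat (\<mu>^2) * Et \<mu> (Suc n) x = (\<Sum>u<\<mu>^2. \<integral>\<^sup>+\<omega>. ennreal_of_enat (min (hit_time \<mu> x (u ## \<omega>)) (enat (Suc n))) \<partial>stream_space (U \<mu>))"
    unfolding Et_def by (rule step_int) (auto simp: assms)
  also have "\<dots> = (\<Sum>u<\<mu>^2. 1 + Et \<mu> n (chain_step \<mu> x u))"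
    unfolding Et_def using assms
    by (intro sum.cong refl) (simp add: hit_Cons nn_integral_add mn emeasure_space_1)
  also have "\<dots> = of_nat (\<mu>^2) + (\<Sum>u<\<mu>^2. Et \<mu> n (chain_step \<mu> x u))"
    by (simp add: sum.distrib)
  finally show ?thesis .
qed

lemma Q_rec:
  assumes "x \<noteq> \<mu>" "\<mu> > 0"
  shows "of_nat (\<mu>^2) * Q \<mu> (Suc t) x = (\<Sum>u<\<mu>^2. Q \<mu> t (chain_step \<mu> x u))"
proof -
  have iff: "enat (Suc t) \<le> eSuc h \<longleftrightarrow> enat t \<le> h" for h
    by (simp add: eSuc_enat[symmetric])
  have "of_nat (\<mu>^2) * Q \<mu> (Suc t) x = (\<Sum>u<\<mu>^2. \<integral>\<^sup>+\<omega>. (if enat (Suc t) \<le> hit_time \<mu> x (u ## \<omega>) then 1 else 0) \<partial>stream_space (U \<mu>))"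
    unfolding Q_def by (rule step_int) (auto simp: assms)
  also have "\<dots> = (\<Sum>u<\<mu>^2. Q \<mu> t (chain_step \<mu> x u))"
    unfolding Q_def using assms
    by (intro sum.cong refl) (simp add: hit_Cons iff)
  finally show ?thesis .
qed

lemma Q_mu: "Q \<mu> (Suc t) \<mu> = 0"
proof -
  have "hit_time \<mu> \<mu> \<omega> = 0" for \<omega>
    unfolding hit_time_def by (auto simp: zero_enat_def intro!: Least_equality exI[of _ 0])
  then show ?thesis unfolding Q_def by (simp add: enat_0_iff)
qed

definition aa :: "nat \<Rightarrow> nat \<Rightarrow> nat" where "aa \<mu> x = x * (\<mu> - x)"
definition bb :: "nat \<Rightarrow> nat \<Rightarrow> nat" where "bb \<mu> x = (if 1 < x then x * (\<mu> - x) else 0)"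

lemma ab_le: "aa \<mu> x + bb \<mu> x \<le> \<mu>^2"
proof (cases "x \<le> \<mu>")
  case True
  then obtain y where y: "\<mu> = x + y" using le_Suc_ex by blast
  have "2*x*y \<le> (x+y)^2" by (simp add: power2_sum)
  then show ?thesis using y unfolding aa_def bb_def by auto
next
  case False then show ?thesis unfolding aa_def bb_def by auto
qed

lemma op_id:
  fixes f :: "nat \<Rightarrow> real"
  assumes x: "1 \<le> x" "x < \<mu>"
  shows "(\<Sum>u<\<mu>^2. f (chain_step \<mu> x u)) =
     real (aa \<mu> x) * f (x+1) + real (bb \<mu> x) * f (x-1) + real (\<mu>^2 - aa \<mu> x - bb \<mu> x) * f x"
proof -
  let ?a = "aa \<mu> x" and ?b = "bb \<mu> x"
  have le: "?a + ?b \<le> \<mu>^2" by (rule ab_le)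
  have s: "(\<Sum>u<\<mu>^2. f (chain_step \<mu> x u)) = (\<Sum>u\<in>{0..<?a}. f (chain_step \<mu> x u)) +
       (\<Sum>u\<in>{?a..<?a+?b}. f (chain_step \<mu> x u)) + (\<Sum>u\<in>{?a+?b..<\<mu>^2}. f (chain_step \<mu> x u))"
    using le by (simp add: sum.atLeastLessThan_concat atLeast0LessThan[symmetric])
  have 1: "(\<Sum>u\<in>{0..<?a}. f (chain_step \<mu> x u)) = real ?a * f (x+1)"
  proof -
    have "(\<Sum>u\<in>{0..<?a}. f (chain_step \<mu> x u)) = (\<Sum>u\<in>{0..<?a}. f (x+1))"
      using x by (intro sum.cong refl) (auto simp: chain_step_def aa_def)
    then show ?thesis by simp
  qed
  have 2: "(\<Sum>u\<in>{?a..<?a+?b}. f (chain_step \<mu> x u)) = real ?b * f (x-1)"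
  proof -
    have "(\<Sum>u\<in>{?a..<?a+?b}. f (chain_step \<mu> x u)) = (\<Sum>u\<in>{?a..<?a+?b}. f (x-1))"
      using x by (intro sum.cong refl) (auto simp: chain_step_def aa_def bb_def split: if_splits)
    then show ?thesis by simp
  qed
  have 3: "(\<Sum>u\<in>{?a+?b..<\<mu>^2}. f (chain_step \<mu> x u)) = real (\<mu>^2 - ?a - ?b) * f x"
  proof -
    have "(\<Sum>u\<in>{?a+?b..<\<mu>^2}. f (chain_step \<mu> x u)) = (\<Sum>u\<in>{?a+?b..<\<mu>^2}. f x)"
      using x by (intro sum.cong refl) (auto simp: chain_step_def aa_def bb_def split: if_splits)
    then show ?thesis by simp
  qed
  show ?thesis using s 1 2 3 by simp
qed

lemma chain_step_range: "1 \<le> x \<Longrightarrow> x \<le> \<mu> \<Longrightarrow> 1 \<le> chain_step \<mu> x u \<and> chain_step \<mu> x u \<le> \<mu>"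
  by (auto simp: chain_step_def)

definition tau :: "nat \<Rightarrow> nat \<Rightarrow> real" where
  "tau \<mu> k = real \<mu> * (harm k + harm (\<mu>-1) - harm (\<mu>-1-k))"
definition g :: "nat \<Rightarrow> nat \<Rightarrow> real" where
  "g \<mu> x = (\<Sum>k\<in>{x..<\<mu>}. tau \<mu> k)"

lemma g_mu: "g \<mu> \<mu> = 0" by (simp add: g_def)

lemma g_step: "x < \<mu> \<Longrightarrow> g \<mu> x = tau \<mu> x + g \<mu> (Suc x)"
  by (simp add: g_def sum.atLeast_Suc_lessThan)

lemma tau_rec:
  assumes "1 \<le> x" "x < \<mu>"
  shows "real (aa \<mu> x) * tau \<mu> x = real \<mu>^2 + real (bb \<mu> x) * tau \<mu> (x-1)"
proof (cases "x = 1")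
  case True
  have m: "\<mu> - 1 = Suc (\<mu> - 2)" using assms True by simp
  have h: "harm (\<mu>-1) = harm (\<mu>-2) + 1 / real (\<mu> - 1)"
    unfolding m harm_Suc using assms True by (simp add: m inverse_eq_divide)
  have p: "real (\<mu> - 1) > 0" using assms True by simp
  have t: "tau \<mu> 1 = real \<mu> * (1 + 1 / real (\<mu> - 1))"
    unfolding tau_def using h by (simp add: numeral_2_eq_2 harm_def)
  have "real (aa \<mu> 1) * tau \<mu> 1 = real \<mu>^2"
    unfolding t aa_def using p assms True by (simp add: of_nat_diff field_simps power2_eq_square)
  then show ?thesis using True by (simp add: bb_def)
next
  case False
  then have x1: "1 < x" using assms by simp
  have h1: "harm x = harm (x-1) + 1 / real x"
    using harm_Suc[of "x-1"] x1 by (simp add: inverse_eq_divide)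
  have m: "\<mu> - x = Suc (\<mu> - 1 - x)" using assms by simp
  have h2: "harm (\<mu> - x) = harm (\<mu> - 1 - x) + 1 / real (\<mu> - x)"
    unfolding m harm_Suc by (simp add: m inverse_eq_divide)
  have e: "\<mu> - 1 - (x - 1) = \<mu> - x" using x1 by simp
  have p1: "real x > 0" "real (\<mu> - x) > 0" using assms by auto
  have "tau \<mu> x - tau \<mu> (x-1) = real \<mu> * (1 / real x + 1 / real (\<mu> - x))"
    unfolding tau_def e using h1 h2 by (simp add: algebra_simps)
  then have "real (aa \<mu> x) * (tau \<mu> x - tau \<mu> (x-1)) = real \<mu>^2"
    using p1 assms by (simp add: aa_def of_nat_diff field_simps power2_eq_square)
  then show ?thesis using x1 by (simp add: bb_def aa_def algebra_simps)
qed

lemma g_eq: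
  assumes "1 \<le> x" "x < \<mu>"
  shows "real (aa \<mu> x + bb \<mu> x) * g \<mu> x = real \<mu>^2 + real (aa \<mu> x) * g \<mu> (x+1) + real (bb \<mu> x) * g \<mu> (x-1)"
proof (cases "x = 1")
  case True
  then show ?thesis using tau_rec[OF assms] g_step[of x \<mu>] assms
    by (simp add: bb_def algebra_simps)
next
  case False
  then have x1: "1 < x" using assms by simp
  have "g \<mu> (x-1) = tau \<mu> (x-1) + g \<mu> x" using g_step[of "x-1" \<mu>] assms x1 by simp
  then show ?thesis using tau_rec[OF assms] g_step[of x \<mu>] assms
    by (simp add: algebra_simps)
qed

lemma harmonic_zero:
  fixes d :: "nat \<Rightarrow> real"
  assumes mu: "\<mu> \<ge> 2"
    and eq: "\<And>x. 1 \<le> x \<Longrightarrow> x < \<mu> \<Longrightarrow> real (aa \<mu> x + bb \<mu> x) * d x = real (aa \<mu> x) * d (x+1) + real (bb \<mu> x) * d (x-1)"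
    and dmu: "d \<mu> = 0"
  shows "1 \<le> x \<Longrightarrow> x \<le> \<mu> \<Longrightarrow> d x = 0"
proof -
  have apos: "1 \<le> x \<Longrightarrow> x < \<mu> \<Longrightarrow> real (aa \<mu> x) > 0" for x by (simp add: aa_def)
  have step: "Suc k < \<mu> \<Longrightarrow> d (Suc k) = d (Suc (Suc k))" for k
  proof (induction k)
    case 0
    have "real (aa \<mu> 1) * d 1 = real (aa \<mu> 1) * d 2"
      using eq[of 1] 0 by (simp add: bb_def numeral_2_eq_2)
    then show ?case using apos[of 1] 0 by (simp add: numeral_2_eq_2)
  next
    case (Suc k)
    have IH: "d (Suc k) = d (Suc (Suc k))" using Suc by simp
    have "real (aa \<mu> (Suc (Suc k)) + bb \<mu> (Suc (Suc k))) * d (Suc (Suc k)) =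
      real (aa \<mu> (Suc (Suc k))) * d (Suc (Suc (Suc k))) + real (bb \<mu> (Suc (Suc k))) * d (Suc k)"
      using eq[of "Suc (Suc k)"] Suc.prems by simp
    moreover have "bb \<mu> (Suc (Suc k)) = aa \<mu> (Suc (Suc k))" by (simp add: aa_def bb_def)
    ultimately have "real (aa \<mu> (Suc (Suc k))) * d (Suc (Suc k)) = real (aa \<mu> (Suc (Suc k))) * d (Suc (Suc (Suc k)))"
      using IH by (simp add: algebra_simps)
    then show ?case using apos[of "Suc (Suc k)"] Suc.prems by simp
  qed
  have "\<forall>x. 1 \<le> x \<and> x \<le> \<mu> \<and> \<mu> - x = j \<longrightarrow> d x = 0" for j
  proof (induction j)
    case 0 then show ?case using dmu by auto
  next
    case (Suc j)
    show ?case
    proof (intro allI impI)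
      fix x assume h: "1 \<le> x \<and> x \<le> \<mu> \<and> \<mu> - x = Suc j"
      then have hh: "1 \<le> x+1 \<and> x+1 \<le> \<mu> \<and> \<mu> - (x+1) = j" by arith
      have "d (x+1) = 0" using Suc.IH hh by blast
      moreover have "x < \<mu>" using h by arith
      then have "d x = d (x+1)" using step[of "x-1"] h by simp
      ultimately show "d x = 0" by simp
    qed
  qed
  then show "1 \<le> x \<Longrightarrow> x \<le> \<mu> \<Longrightarrow> d x = 0" by blast
qed

lemma tau_nonneg: "k < \<mu> \<Longrightarrow> tau \<mu> k \<ge> 0"
proof -
  have "harm (\<mu>-1-k) \<le> (harm (\<mu>-1) :: real)" by (rule harm_mono) arith
  moreover have "0 \<le> (harm k :: real)" by (rule harm_nonneg)
  ultimately show ?thesis unfolding tau_def by (intro mult_nonneg_nonneg) auto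
qed

lemma g_nonneg: "g \<mu> x \<ge> 0"
  unfolding g_def by (intro sum_nonneg tau_nonneg) auto

lemma sup_min_enat: "Sup (range (\<lambda>n. min h (enat n))) = h"
proof (cases h)
  case (enat k)
  show ?thesis
  proof (rule antisym)
    show "Sup (range (\<lambda>n. min h (enat n))) \<le> h" by (auto intro!: Sup_least)
    show "h \<le> Sup (range (\<lambda>n. min h (enat n)))"
      by (rule Sup_upper2[OF rangeI[of "\<lambda>n. min h (enat n)" k]]) (simp add: enat)
  qed
next
  case infinity
  have "infinite (range enat)"
    using finite_imageD[of enat UNIV] by (auto simp: inj_on_def)
  then show ?thesis using infinity by (simp add: Sup_enat_def)
qed

lemma E_SUP: "E \<mu> x = (SUP n. Et \<mu> n x)"
proof -
  have "E \<mu> x = (\<integral>\<^sup>+\<omega>. (SUP n. ennreal_of_enat (min (hit_time \<mu> x \<omega>) (enat n))) \<partial>stream_space (U \<mu>))"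
    unfolding E_def
    by (intro nn_integral_cong) (metis ennreal_of_enat_Sup sup_min_enat image_image)
  also have "\<dots> = (SUP n. Et \<mu> n x)"
    unfolding Et_def
    by (rule nn_integral_monotone_convergence_SUP)
       (auto simp: incseq_def le_fun_def min_le_iff_disj)
  finally show ?thesis .
qed

context
  fixes \<mu> :: nat assumes mu: "\<mu> \<ge> 2"
begin

lemma g_sum_step:
  assumes "1 \<le> x" "x < \<mu>"
  shows "real (\<mu>^2) + (\<Sum>u<\<mu>^2. g \<mu> (chain_step \<mu> x u)) = real (\<mu>^2) * g \<mu> x"
  using op_id[OF assms, of "g \<mu>"] g_eq[OF assms] ab_le[of \<mu> x]
  by (simp add: of_nat_diff algebra_simps)

lemma Et_le_g: "1 \<le> x \<Longrightarrow> x \<le> \<mu> \<Longrightarrow> Et \<mu> n x \<le> ennreal (g \<mu> x)"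
proof (induction n arbitrary: x)
  case 0 then show ?case by (simp add: Et_0)
next
  case (Suc n)
  show ?case
  proof (cases "x = \<mu>")
    case True then show ?thesis by (simp add: Et_mu)
  next
    case False
    then have xl: "x < \<mu>" using Suc.prems by simp
    have "of_nat (\<mu>^2) * Et \<mu> (Suc n) x = of_nat (\<mu>^2) + (\<Sum>u<\<mu>^2. Et \<mu> n (chain_step \<mu> x u))"
      using Et_rec[OF False] mu by simp
    also have "\<dots> \<le> of_nat (\<mu>^2) + (\<Sum>u<\<mu>^2. ennreal (g \<mu> (chain_step \<mu> x u)))"
      using Suc.IH chain_step_range Suc.prems by (intro add_left_mono sum_mono) auto
    also have "\<dots> = ennreal (real (\<mu>^2) + (\<Sum>u<\<mu>^2. g \<mu> (chain_step \<mu> x u)))"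
      by (simp add: g_nonneg sum_nonneg ennreal_of_nat_eq_real_of_nat)
    also have "\<dots> = of_nat (\<mu>^2) * ennreal (g \<mu> x)"
      using g_sum_step[OF Suc.prems(1) xl] by (simp add: ennreal_mult'[of "(real \<mu>)^2"] ennreal_of_nat_eq_real_of_nat)
    finally have le: "of_nat (\<mu>^2) * Et \<mu> (Suc n) x \<le> of_nat (\<mu>^2) * ennreal (g \<mu> x)" .
    have nz: "of_nat (\<mu>^2) \<noteq> (0::ennreal)" using mu by simp
    have nt: "of_nat (\<mu>^2) \<noteq> (top::ennreal)" by (rule ennreal_of_nat_neq_top)
    show ?thesis using ennreal_mult_le_mult_iff[OF nz nt] le by blast
  qed
qed

lemma E_le_g: "1 \<le> x \<Longrightarrow> x \<le> \<mu> \<Longrightarrow> E \<mu> x \<le> ennreal (g \<mu> x)"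
  unfolding E_SUP by (rule SUP_least) (rule Et_le_g)

lemma E_eq_g: assumes "1 \<le> x" "x \<le> \<mu>" shows "E \<mu> x = ennreal (g \<mu> x)"
proof -
  define e where "e y = enn2real (E \<mu> y)" for y
  have Ee: "1 \<le> y \<Longrightarrow> y \<le> \<mu> \<Longrightarrow> E \<mu> y = ennreal (e y)" for y
    using E_le_g[of y] unfolding e_def
    by (metis ennreal_enn2real ennreal_less_top top.not_eq_extremum order_le_less_trans)
  have enn: "e y \<ge> 0" for y unfolding e_def by simp
  have req: "real (\<mu>^2) * e y = real (\<mu>^2) + (\<Sum>u<\<mu>^2. e (chain_step \<mu> y u))"
    if y: "1 \<le> y" "y < \<mu>" for y
  proof -
    have "ennreal (real (\<mu>^2) * e y) = of_nat (\<mu>^2) * E \<mu> y"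
      using Ee[of y] y by (simp add: ennreal_mult'[of "(real \<mu>)^2"] ennreal_of_nat_eq_real_of_nat)
    also have "\<dots> = of_nat (\<mu>^2) + (\<Sum>u<\<mu>^2. E \<mu> (chain_step \<mu> y u))"
      using E_rec[of y \<mu>] y mu by simp
    also have "\<dots> = of_nat (\<mu>^2) + (\<Sum>u<\<mu>^2. ennreal (e (chain_step \<mu> y u)))"
      using Ee chain_step_range y by (intro arg_cong2[where f="(+)"] sum.cong) auto
    also have "\<dots> = ennreal (real (\<mu>^2) + (\<Sum>u<\<mu>^2. e (chain_step \<mu> y u)))"
      by (simp add: enn sum_nonneg ennreal_of_nat_eq_real_of_nat)
    finally show ?thesis
      using enn by (subst (asm) ennreal_inj) (auto intro!: add_nonneg_nonneg sum_nonneg)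
  qed
  define d where "d y = g \<mu> y - e y" for y
  have deq: "real (aa \<mu> y + bb \<mu> y) * d y = real (aa \<mu> y) * d (y+1) + real (bb \<mu> y) * d (y-1)"
    if y: "1 \<le> y" "y < \<mu>" for y
  proof -
    have "real (\<mu>^2) * e y = real (\<mu>^2) + (real (aa \<mu> y) * e (y+1) + real (bb \<mu> y) * e (y-1) + real (\<mu>^2 - aa \<mu> y - bb \<mu> y) * e y)"
      using req[OF y] op_id[OF y, of e] by simp
    then have "real (aa \<mu> y + bb \<mu> y) * e y = real (\<mu>^2) + real (aa \<mu> y) * e (y+1) + real (bb \<mu> y) * e (y-1)"
      using ab_le[of \<mu> y] by (simp add: of_nat_diff algebra_simps)
    then show ?thesis using g_eq[OF y] unfolding d_def by (simp add: algebra_simps)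
  qed
  have "d \<mu> = 0" unfolding d_def e_def by (simp add: g_mu E_mu)
  then have "d x = 0" using harmonic_zero[OF mu, of d] deq assms by blast
  then show ?thesis using Ee[OF assms] unfolding d_def by simp
qed

end

lemma reidx:
  fixes f :: "nat \<Rightarrow> 'a::comm_monoid_add"
  shows "x \<le> \<mu> \<Longrightarrow> (\<Sum>k\<in>{x..<\<mu>}. f k) = (\<Sum>i<\<mu>-x. f (x+i))"
  using sum.shift_bounds_nat_ivl[where g=f and m=0 and k=x and n="\<mu>-x"] by (simp add: atLeast0LessThan add.commute)

lemma Dsum:
  assumes "x \<le> \<mu>"
  shows "(\<Sum>k\<in>{x..<\<mu>}. (harm k - harm (\<mu>-1-k) :: real)) = (\<Sum>i<\<mu>-x. harm (x+i) - harm i)"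
proof -
  have "(\<Sum>k\<in>{x..<\<mu>}. (harm k - harm (\<mu>-1-k) :: real)) = (\<Sum>i<\<mu>-x. harm (x+i)) - (\<Sum>i<\<mu>-x. harm (\<mu>-1-(x+i)))"
    unfolding sum_subtractf using reidx[OF assms, of "harm :: nat \<Rightarrow> real"] reidx[OF assms, of "\<lambda>k. harm (\<mu>-1-k) :: real"] by simp
  also have "(\<Sum>i<\<mu>-x. harm (\<mu>-1-(x+i)) :: real) = (\<Sum>i<\<mu>-x. harm ((\<mu>-x) - Suc i))"
    by (intro sum.cong refl) (simp add: diff_diff_add)
  also have "\<dots> = (\<Sum>i<\<mu>-x. harm i)" by (rule sum.nat_diff_reindex)
  finally show ?thesis by (simp add: sum_subtractf)
qed

lemma g_split:
  assumes "x \<le> \<mu>"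
  shows "g \<mu> x = real \<mu> * (real (\<mu>-x) * harm (\<mu>-1) + (\<Sum>i<\<mu>-x. harm (x+i) - harm i))"
proof -
  have "g \<mu> x = (\<Sum>k\<in>{x..<\<mu>}. real \<mu> * (harm (\<mu>-1) + (harm k - harm (\<mu>-1-k))))"
    unfolding g_def tau_def by (intro sum.cong refl) (simp add: algebra_simps)
  also have "\<dots> = real \<mu> * (real (\<mu>-x) * harm (\<mu>-1) + (\<Sum>k\<in>{x..<\<mu>}. (harm k - harm (\<mu>-1-k))))"
    by (simp add: sum_distrib_left[symmetric] sum.distrib)
  finally show ?thesis using Dsum[OF assms] by simp
qed

lemma g_lower:
  assumes "1 \<le> x" "x \<le> \<mu>"
  shows "real (\<mu>-x) * real \<mu> * harm (\<mu>-1) \<le> g \<mu> x"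
proof -
  have "0 \<le> (\<Sum>i<\<mu>-x. harm (x+i) - harm i :: real)"
    by (intro sum_nonneg) (simp add: harm_mono)
  then show ?thesis unfolding g_split[OF assms(2)] by (simp add: algebra_simps)
qed

lemma g_one: "\<mu> \<ge> 1 \<Longrightarrow> g \<mu> 1 = real \<mu>^2 * harm (\<mu>-1)"
proof -
  assume m: "\<mu> \<ge> 1"
  have "(\<Sum>i<\<mu>-1. harm (1+i) - harm i :: real) = harm (\<mu>-1)"
    using sum_lessThan_telescope[of "harm :: nat \<Rightarrow> real" "\<mu>-1"] by (simp add: harm_def)
  then show ?thesis unfolding g_split[OF m] using m by (simp add: of_nat_diff power2_eq_square algebra_simps)
qed

lemma g_le_one: assumes "1 \<le> x" shows "g \<mu> x \<le> g \<mu> 1"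
  unfolding g_def using assms by (intro sum_mono2) (auto intro: tau_nonneg)

lemma tau_upper: "k < \<mu> \<Longrightarrow> tau \<mu> k \<le> 2 * real \<mu> * harm (\<mu>-1)"
proof -
  assume k: "k < \<mu>"
  have "harm k \<le> (harm (\<mu>-1) :: real)" by (rule harm_mono) (use k in arith)
  moreover have "0 \<le> (harm (\<mu>-1-k) :: real)" by (rule harm_nonneg)
  ultimately have "harm k + harm (\<mu>-1) - harm (\<mu>-1-k) \<le> 2 * (harm (\<mu>-1) :: real)" by simp
  from mult_left_mono[OF this, of "real \<mu>"] show ?thesis unfolding tau_def by (simp add: algebra_simps)
qed

lemma g_upper: "x \<le> \<mu> \<Longrightarrow> g \<mu> x \<le> real (\<mu>-x) * (2 * real \<mu> * harm (\<mu>-1))"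
proof -
  assume "x \<le> \<mu>"
  have "g \<mu> x \<le> (\<Sum>k\<in>{x..<\<mu>}. 2 * real \<mu> * harm (\<mu>-1))"
    unfolding g_def by (intro sum_mono tau_upper) auto
  then show ?thesis by simp
qed

lemma harm_double: "harm (2*m) \<le> 2 * (harm m :: real)"
proof (induction m)
  case 0 then show ?case by (simp add: harm_def)
next
  case (Suc m)
  have e: "2 * Suc m = Suc (Suc (2*m))" by simp
  have "harm (2 * Suc m) = harm (2*m) + 1 / real (Suc (2*m)) + 1 / real (Suc (Suc (2*m)))"
    unfolding e harm_Suc by (simp add: inverse_eq_divide)
  also have "1 / real (Suc (2*m)) \<le> 1 / real (Suc m)" by (rule divide_left_mono) auto
  also have "1 / real (Suc (Suc (2*m))) \<le> 1 / real (Suc m)" by (rule divide_left_mono) auto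
  finally show ?case using Suc.IH by (simp add: harm_Suc inverse_eq_divide)
qed

lemma harm_half: "harm (\<mu>-1) \<le> 2 * (harm (\<mu> div 2) :: real)"
proof -
  have "harm (\<mu>-1) \<le> (harm (2 * (\<mu> div 2)) :: real)" by (rule harm_mono) arith
  also have "\<dots> \<le> 2 * harm (\<mu> div 2)" by (rule harm_double)
  finally show ?thesis .
qed

lemma harm_le_ln: "harm m \<le> ln (2 * real m + 1)"
proof (induction m)
  case 0 then show ?case by (simp add: harm_def)
next
  case (Suc m)
  have "ln (2 * real m + 3) - ln (2 * real m + 1) \<ge> 2 * ((2 * real m + 3) - (2 * real m + 1)) / ((2 * real m + 1) + (2 * real m + 3))"
    by (rule ln_inverse_approx_ge) auto
  also have "2 * ((2 * real m + 3) - (2 * real m + 1)) / ((2 * real m + 1) + (2 * real m + 3)) = 1 / real (Suc m)"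
    by (simp add: field_simps)
  finally have "1 / real (Suc m) \<le> ln (2 * real m + 3) - ln (2 * real m + 1)" .
  then show ?case using Suc.IH by (simp add: harm_Suc inverse_eq_divide algebra_simps)
qed

lemma ln3: "1 \<le> ln (3::real)"
proof -
  have "ln 3 - ln 1 \<ge> 2 * (3 - 1) / (1 + (3::real))" by (rule ln_inverse_approx_ge) auto
  then show ?thesis by simp
qed

lemma ln2: "ln (2::real) \<le> 3/4"
proof -
  have "ln (1 + 1) - ln 1 \<le> 1 * (inverse 1 + inverse (1 + (1::real))) / 2" by (rule ln_inverse_approx_le) auto
  then show ?thesis by simp
qed

lemma third:
  assumes mu: "\<mu> \<ge> 2" and x: "1 \<le> x0" "x0 \<le> \<mu>"
  shows "real (\<mu> - x0) * harm (\<mu> div 2) \<le> real \<mu> * ln (real \<mu>)"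
proof (cases "even \<mu>")
  case True
  define m where "m = \<mu> div 2"
  have "\<mu> = 2 * m" using True unfolding m_def by presburger
  then have mm: "real \<mu> = 2 * real m" by simp
  have h: "harm m \<le> ln (real \<mu> + 1)" using harm_le_ln[of m] mm by simp
  have h0: "0 \<le> (harm m :: real)" by (rule harm_nonneg)
  have d: "ln (real \<mu> + 1) - ln (real \<mu>) < 1 / real \<mu>" by (rule ln_diff_le_inverse) (use mu in simp)
  have l3: "1 \<le> ln (real \<mu> + 1)"
  proof -
    have "ln 3 \<le> ln (real \<mu> + 1)" using mu by simp
    then show ?thesis by (rule order_trans[OF ln3])
  qed
  have "real (\<mu> - x0) * harm m \<le> (real \<mu> - 1) * harm m"
    using x h0 by (intro mult_right_mono) (auto simp: of_nat_diff)
  also have "\<dots> \<le> (real \<mu> - 1) * ln (real \<mu> + 1)"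
    using h mu by (intro mult_left_mono) auto
  also have "\<dots> \<le> real \<mu> * ln (real \<mu>)"
  proof -
    have "real \<mu> * (ln (real \<mu> + 1) - ln (real \<mu>)) \<le> 1"
      using d mu by (simp add: field_simps)
    then show ?thesis using l3 by (simp add: algebra_simps)
  qed
  finally show ?thesis unfolding m_def .
next
  case False
  define m where "m = \<mu> div 2"
  have "\<mu> = 2 * m + 1" using False unfolding m_def by presburger
  then have mm: "real \<mu> = 2 * real m + 1" by simp
  have h: "harm m \<le> ln (real \<mu>)" using harm_le_ln[of m] mm by simp
  have h0: "0 \<le> (harm m :: real)" by (rule harm_nonneg)
  have "real (\<mu> - x0) * harm m \<le> real \<mu> * harm m"
    using h0 by (intro mult_right_mono) auto
  also have "\<dots> \<le> real \<mu> * ln (real \<mu>)" using h by (intro mult_left_mono) auto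
  finally show ?thesis unfolding m_def .
qed

lemma cancel_mu2:
  assumes "\<mu> > 0" "of_nat (\<mu>^2) * a \<le> of_nat (\<mu>^2) * (b::ennreal)"
  shows "a \<le> b"
proof -
  have nz: "of_nat (\<mu>^2) \<noteq> (0::ennreal)" using assms by simp
  have nt: "of_nat (\<mu>^2) \<noteq> (top::ennreal)" by (rule ennreal_of_nat_neq_top)
  show ?thesis using ennreal_mult_le_mult_iff[OF nz nt] assms(2) by blast
qed

lemma Q_mult:
  assumes mu: "\<mu> > 0" and c: "\<And>y. 1 \<le> y \<Longrightarrow> y \<le> \<mu> \<Longrightarrow> Q \<mu> s y \<le> c"
  shows "1 \<le> x \<Longrightarrow> x \<le> \<mu> \<Longrightarrow> Q \<mu> (t + s) x \<le> Q \<mu> t x * c"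
proof (induction t arbitrary: x)
  case 0 then show ?case using c by (simp add: Q_0)
next
  case (Suc t)
  show ?case
  proof (cases "x = \<mu>")
    case True then show ?thesis using Q_mu[of \<mu> "t+s"] by simp
  next
    case False
    have "of_nat (\<mu>^2) * Q \<mu> (Suc t + s) x = (\<Sum>u<\<mu>^2. Q \<mu> (t+s) (chain_step \<mu> x u))"
      using Q_rec[OF False mu, of "t+s"] by simp
    also have "\<dots> \<le> (\<Sum>u<\<mu>^2. Q \<mu> t (chain_step \<mu> x u) * c)"
      using Suc.IH chain_step_range Suc.prems by (intro sum_mono) auto
    also have "\<dots> = (\<Sum>u<\<mu>^2. Q \<mu> t (chain_step \<mu> x u)) * c"
      by (simp add: sum_distrib_right)
    also have "\<dots> = of_nat (\<mu>^2) * (Q \<mu> (Suc t) x * c)"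
      using Q_rec[OF False mu, of t] by (metis mult.assoc)
    finally show ?thesis by (rule cancel_mu2[OF mu])
  qed
qed

lemma Q_pow:
  assumes mu: "\<mu> > 0" and c: "\<And>y. 1 \<le> y \<Longrightarrow> y \<le> \<mu> \<Longrightarrow> Q \<mu> s y \<le> c"
  shows "1 \<le> x \<Longrightarrow> x \<le> \<mu> \<Longrightarrow> Q \<mu> (m * s) x \<le> c ^ m"
proof (induction m)
  case 0 then show ?case by (simp add: Q_0)
next
  case (Suc m)
  have "Q \<mu> (Suc m * s) x = Q \<mu> (m * s + s) x" by (simp add: add.commute)
  also have "\<dots> \<le> Q \<mu> (m * s) x * c" by (rule Q_mult[OF mu c Suc.prems])
  also have "\<dots> \<le> c ^ m * c" by (rule mult_right_mono[OF Suc.IH[OF Suc.prems]]) simp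
  finally show ?case by (simp add: mult.commute)
qed

lemma Q_anti: "t \<le> t' \<Longrightarrow> Q \<mu> t' x \<le> Q \<mu> t x"
proof -
  assume tt: "t \<le> t'"
  have "enat t \<le> h" if "enat t' \<le> h" for h
    using tt that by (metis enat_ord_simps(1) order_trans)
  then show ?thesis unfolding Q_def by (intro nn_integral_mono) auto
qed

lemma Q_markov: "of_nat s * Q \<mu> s y \<le> E \<mu> y"
proof -
  have "of_nat s * Q \<mu> s y = (\<integral>\<^sup>+\<omega>. of_nat s * (if enat s \<le> hit_time \<mu> y \<omega> then 1 else 0) \<partial>stream_space (U \<mu>))"
    unfolding Q_def by (rule nn_integral_cmult[symmetric]) measurable
  also have "\<dots> \<le> E \<mu> y"
    unfolding E_def
    by (intro nn_integral_mono) (auto simp: ennreal_of_enat_le_iff[symmetric] simp del: ennreal_of_enat_le_iff)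
  finally show ?thesis .
qed

lemma meas_Q:
  assumes "thr \<ge> 0"
  shows "emeasure (stream_space (U \<mu>)) {\<omega> \<in> space (stream_space (U \<mu>)). ereal thr \<le> ereal_of_enat (hit_time \<mu> x \<omega>)}
        = Q \<mu> (nat \<lceil>thr\<rceil>) x"
proof -
  have iff: "ereal thr \<le> ereal_of_enat h \<longleftrightarrow> enat (nat \<lceil>thr\<rceil>) \<le> h" for h
    by (cases h) auto
  have "Q \<mu> (nat \<lceil>thr\<rceil>) x = (\<integral>\<^sup>+\<omega>. indicator {\<omega> \<in> space (stream_space (U \<mu>)). enat (nat \<lceil>thr\<rceil>) \<le> hit_time \<mu> x \<omega>} \<omega> \<partial>stream_space (U \<mu>))"
    unfolding Q_def by (intro nn_integral_cong) (auto simp: indicator_def)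
  also have "\<dots> = emeasure (stream_space (U \<mu>)) {\<omega> \<in> space (stream_space (U \<mu>)). enat (nat \<lceil>thr\<rceil>) \<le> hit_time \<mu> x \<omega>}"
    by (rule nn_integral_indicator) measurable
  finally show ?thesis unfolding iff by simp
qed

lemma Q_half:
  assumes mu: "\<mu> \<ge> 2" and y: "1 \<le> y" "y \<le> \<mu>" and s: "2 * real \<mu>^2 * harm (\<mu>-1) \<le> real s" "s > 0"
  shows "Q \<mu> s y \<le> ennreal (1/2)"
proof -
  have "of_nat s * Q \<mu> s y \<le> E \<mu> y" by (rule Q_markov)
  also have "\<dots> = ennreal (g \<mu> y)" by (rule E_eq_g[OF mu y])
  also have "\<dots> \<le> ennreal (real \<mu>^2 * harm (\<mu>-1))"
    using g_le_one[OF y(1), of \<mu>] g_one[of \<mu>] mu by (intro ennreal_leI) simp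
  also have "\<dots> \<le> ennreal (real s * (1/2))" using s by (intro ennreal_leI) simp
  also have "\<dots> = ennreal (real s) * ennreal (1/2)"
    by (rule ennreal_mult'') simp
  also have "\<dots> = of_nat s * ennreal (1/2)"
    by (simp only: ennreal_of_nat_eq_real_of_nat)
  finally have le: "of_nat s * Q \<mu> s y \<le> of_nat s * ennreal (1/2)" .
  have nz: "of_nat s \<noteq> (0::ennreal)" using s by simp
  have nt: "of_nat s \<noteq> (top::ennreal)" by (rule ennreal_of_nat_neq_top)
  show ?thesis using ennreal_mult_le_mult_iff[OF nz nt] le by blast
qed

lemma tail:
  assumes mu: "\<mu> \<ge> 2" and x: "1 \<le> x0" "x0 \<le> \<mu>" and n: "0 < n" "\<mu> \<le> n"
  shows "measure (innov_space \<mu>) {\<omega> \<in> space (innov_space \<mu>).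
            ereal (8 * (real \<mu>)^2 * (log 2 (real n))^3) \<le> ereal_of_enat (hit_time \<mu> x0 \<omega>)}
         \<le> real n powr (- log 2 (real n))"
proof -
  define L where "L = log 2 (real n)"
  define H where "H = (harm (\<mu>-1) :: real)"
  define M where "M = (real \<mu>)^2"
  have n2: "real n \<ge> 2" using mu n by simp
  have L1: "L \<ge> 1" unfolding L_def using n2 by simp
  have lnn: "ln (real n) = L * ln 2" unfolding L_def log_def by simp
  have M4: "M \<ge> 4"
  proof -
    have "(2::real)^2 \<le> (real \<mu>)^2" using mu by (intro power_mono) auto
    then show ?thesis unfolding M_def by simp
  qed
  have HL: "H \<le> 3/4 * (1 + L)"
  proof -
    have "H \<le> ln (2 * real (\<mu>-1) + 1)" unfolding H_def by (rule harm_le_ln)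
    also have "\<dots> \<le> ln (2 * real n)" using mu n by (subst ln_le_cancel_iff) (auto simp: of_nat_diff)
    also have "\<dots> = ln 2 * (1 + L)" using n2 lnn by (simp add: ln_mult algebra_simps)
    also have "\<dots> \<le> 3/4 * (1 + L)" using ln2 L1 by (intro mult_right_mono) auto
    finally show ?thesis .
  qed
  define m where "m = nat \<lceil>L^2\<rceil>"
  have c0: "\<lceil>L^2\<rceil> \<ge> 0"
  proof -
    have "0 \<le> L^2" by simp
    then have "-1 < L^2" by linarith
    then show ?thesis by simp
  qed
  have mr: "real m = of_int \<lceil>L^2\<rceil>" unfolding m_def using c0 by simp
  have m1: "real m \<ge> L^2" "real m < L^2 + 1" unfolding mr using ceiling_correct[of "L^2"] by linarith+
  have L2: "L^2 \<ge> 1" using L1 by (simp add: one_le_power)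
  have mpos: "m > 0" using m1 L2 by simp
  define thr where "thr = 8 * M * L^3"
  define ts where "ts = nat \<lceil>thr\<rceil>"
  have thr0: "thr \<ge> 0" unfolding thr_def M_def using L1 by simp
  have ts1: "real ts \<ge> thr" unfolding ts_def by linarith
  define s where "s = ts div m"
  have sm: "s * m \<le> ts" unfolding s_def by simp
  have sgt: "real s > real ts / real m - 1"
  proof -
    have "ts = s * m + ts mod m" unfolding s_def by simp
    then have "real ts = real s * real m + real (ts mod m)" by (metis of_nat_add of_nat_mult)
    moreover have "real (ts mod m) < real m" using mpos by simp
    ultimately show ?thesis using mpos by (simp add: field_simps)
  qed
  have "4 * M * L * real m \<le> 4 * M * L * (L^2 + 1)"
    using m1 M4 L1 by (intro mult_left_mono) auto
  also have "\<dots> \<le> 4 * M * L * (2 * L^2)"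
    using L2 M4 L1 by (intro mult_left_mono) auto
  also have "\<dots> = thr" unfolding thr_def by (simp add: power3_eq_cube power2_eq_square)
  finally have "4 * M * L * real m \<le> real ts" using ts1 by linarith
  then have "4 * M * L \<le> real ts / real m" using mpos by (simp add: pos_le_divide_eq)
  then have s4: "real s > 4 * M * L - 1" using sgt by simp
  have hML: "M * L \<ge> M" using L1 M4 by simp
  have MH: "4 * (M * H) \<le> 3 * M + 3 * (M * L)" using HL M4 mult_left_mono[OF HL, of M]
    by (simp add: algebra_simps)
  have e1: "4 * M * L = 4 * (M * L)" "2 * M * H = 2 * (M * H)" by simp_all
  have sH: "2 * M * H \<le> real s" using s4 hML MH M4 unfolding e1 by linarith
  have "real s > 0" using s4 hML M4 unfolding e1 by linarith
  then have spos: "s > 0" by simp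
  have half: "\<And>y. 1 \<le> y \<Longrightarrow> y \<le> \<mu> \<Longrightarrow> Q \<mu> s y \<le> ennreal (1/2)"
    using Q_half[OF mu _ _ _ spos] sH unfolding M_def H_def by simp
  have "Q \<mu> (m * s) x0 \<le> ennreal (1/2) ^ m"
    by (rule Q_pow[OF _ half x]) (use mu in simp)
  moreover have "ennreal (1/2) ^ m = ennreal ((1/2) ^ m)" by (rule ennreal_power) simp
  ultimately have Qm: "Q \<mu> (m * s) x0 \<le> ennreal ((1/2) ^ m)" by (simp only:)
  have "Q \<mu> ts x0 \<le> Q \<mu> (m * s) x0" by (rule Q_anti) (use sm in \<open>simp add: mult.commute\<close>)
  then have Qts: "Q \<mu> ts x0 \<le> ennreal ((1/2) ^ m)" using Qm by simp
  have meq: "measure (innov_space \<mu>) {\<omega> \<in> space (innov_space \<mu>). ereal thr \<le> ereal_of_enat (hit_time \<mu> x0 \<omega>)}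
        = enn2real (Q \<mu> ts x0)"
    unfolding measure_def innov_space_def ts_def using meas_Q[OF thr0, of \<mu> x0] by simp
  have "enn2real (Q \<mu> ts x0) \<le> (1/2) ^ m"
    using enn2real_mono[OF Qts] by simp
  also have "(1/2::real) ^ m = 2 powr (- real m)"
    by (simp add: powr_minus powr_realpow power_one_over inverse_eq_divide)
  also have "\<dots> \<le> 2 powr (- (L^2))" using m1 by simp
  also have "2 powr (- (L^2)) = real n powr (- L)"
  proof -
    have "real n powr (- L) = (2 powr L) powr (- L)" unfolding L_def using n2 by simp
    also have "\<dots> = 2 powr (- (L^2))" by (simp add: powr_powr power2_eq_square)
    finally show ?thesis by simp
  qed
  finally show ?thesis using meq unfolding thr_def M_def L_def by simp
qed

theorem lemma7:
  fixes \<mu> x0 :: nat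
  assumes "\<mu> \<ge> 2" and "1 \<le> x0" and "x0 \<le> \<mu>"
  shows "ennreal ((1/2) * (real \<mu> - real x0) * real \<mu> * ln (real \<mu> - 1))
           \<le> (\<integral>\<^sup>+ \<omega>. ennreal_of_enat (hit_time \<mu> x0 \<omega>) \<partial>innov_space \<mu>)
       \<and> (\<integral>\<^sup>+ \<omega>. ennreal_of_enat (hit_time \<mu> x0 \<omega>) \<partial>innov_space \<mu>)
           \<le> ennreal (4 * (real \<mu> - real x0) * real \<mu> * harm (\<mu> div 2))
       \<and> 4 * (real \<mu> - real x0) * real \<mu> * harm (\<mu> div 2) \<le> 4 * (real \<mu>)^2 * ln (real \<mu>)
       \<and> (\<forall>n::nat. 0 < n \<and> \<mu> \<le> n \<longrightarrow>
            measure (innov_space \<mu>)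
              {\<omega> \<in> space (innov_space \<mu>).
                 ereal (8 * (real \<mu>)^2 * (log 2 (real n))^3) \<le> ereal_of_enat (hit_time \<mu> x0 \<omega>)}
            \<le> real n powr (- log 2 (real n)))"
proof -
  note mu = assms(1) and x = assms(2,3)
  have ie: "(\<integral>\<^sup>+ \<omega>. ennreal_of_enat (hit_time \<mu> x0 \<omega>) \<partial>innov_space \<mu>) = ennreal (g \<mu> x0)"
    using E_eq_g[OF mu x] unfolding E_def innov_space_def by simp
  have d: "real \<mu> - real x0 = real (\<mu> - x0)" using x by (simp add: of_nat_diff)
  define H where "H = (harm (\<mu>-1) :: real)"
  have lnH: "ln (real \<mu>) \<le> H" unfolding H_def using ln_le_harm[of "\<mu>-1"] mu by (simp add: of_nat_diff)
  have ln1: "0 \<le> ln (real \<mu> - 1)" using mu by simp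
  have ln2': "ln (real \<mu> - 1) \<le> ln (real \<mu>)" using mu by simp
  have p0: "0 \<le> real (\<mu> - x0) * real \<mu>" by simp
  have part1: "(1/2) * (real \<mu> - real x0) * real \<mu> * ln (real \<mu> - 1) \<le> g \<mu> x0"
  proof -
    have "(1/2) * ln (real \<mu> - 1) \<le> H" using lnH ln1 ln2' by linarith
    then have "real (\<mu> - x0) * real \<mu> * ((1/2) * ln (real \<mu> - 1)) \<le> real (\<mu> - x0) * real \<mu> * H"
      by (rule mult_left_mono[OF _ p0])
    also have "\<dots> \<le> g \<mu> x0" using g_lower[OF x] unfolding H_def by simp
    finally show ?thesis unfolding d by (simp add: algebra_simps)
  qed
  have part2: "g \<mu> x0 \<le> 4 * (real \<mu> - real x0) * real \<mu> * harm (\<mu> div 2)"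
  proof -
    have "g \<mu> x0 \<le> real (\<mu>-x0) * (2 * real \<mu> * H)" using g_upper[OF x(2)] unfolding H_def .
    also have "\<dots> \<le> real (\<mu>-x0) * (2 * real \<mu> * (2 * harm (\<mu> div 2)))"
      using harm_half[of \<mu>] unfolding H_def by (intro mult_left_mono) auto
    finally show ?thesis unfolding d by (simp add: algebra_simps)
  qed
  have part3: "4 * (real \<mu> - real x0) * real \<mu> * harm (\<mu> div 2) \<le> 4 * (real \<mu>)^2 * ln (real \<mu>)"
  proof -
    have "4 * real \<mu> * (real (\<mu> - x0) * harm (\<mu> div 2)) \<le> 4 * real \<mu> * (real \<mu> * ln (real \<mu>))"
      using third[OF mu x] by (intro mult_left_mono) auto
    then show ?thesis unfolding d by (simp add: algebra_simps power2_eq_square)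
  qed
  have part4: "\<forall>n::nat. 0 < n \<and> \<mu> \<le> n \<longrightarrow>
            measure (innov_space \<mu>)
              {\<omega> \<in> space (innov_space \<mu>).
                 ereal (8 * (real \<mu>)^2 * (log 2 (real n))^3) \<le> ereal_of_enat (hit_time \<mu> x0 \<omega>)}
            \<le> real n powr (- log 2 (real n))"
    using tail[OF mu x] by blast
  show ?thesis unfolding ie using part1 part2 part3 part4 by (auto intro: ennreal_leI)
qed

end
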